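(* Let $s:\mathbb{R}\to\mathbb{R}$ be continuous, nondecreasing, with $\lim_{x\to-\infty}s(x)=0$ and $\lim_{x\to\infty}s(x)=1$. Let $F:[0,1]^d\to\mathbb{R}$ be of the form $F(\boldsymbol{x})=\sum_{i=1}^N\psi_i(\boldsymbol{a}_i^\top\boldsymbol{x}+b_i)$ with $\boldsymbol{a}_i\in\mathbb{R}^d$, $b_i\in\mathbb{R}$ and each $\psi_i\in C^1(\mathbb{R})$ convex. Then for every $\epsilon>0$ there exist $M\ge1$, $\boldsymbol{W}\in\mathbb{R}^{M\times d}$, $\boldsymbol{c}\in\mathbb{R}^M$, $\boldsymbol{b}\in\mathbb{R}^d$, and scalars $u_j\ge0$, $v_j\ge 0$, $\beta_j\in\mathbb{R}$ ($j=1,\dots,M$) such that, with the elementwise activation $\sigma(\boldsymbol{z})_j=u_j\,s(v_jz_j+\beta_j)$, $$\sup_{\boldsymbol{x}\in[0,1]^d}\|\nabla F(\boldsymbol{x})-(\boldsymbol{W}^\top\sigma(\boldsymbol{W}\boldsymbol{x}+\boldsymbol{c})+\boldsymbol{b})\|<\epsilon .$$ Each such approximator is the gradient of a convex $C^1$ function on $\mathbb{R}^d$.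
   Context: $C^1(\mathbb{R})$ denotes continuously differentiable real functions on $\mathbb{R}$. $\|\cdot\|$ is the Euclidean norm. *)

theory Defs
  imports "HOL-Analysis.Analysis"
begin

definition unit_cube :: "(real ^ 'n) set" where
  "unit_cube = {x. \<forall>i. 0 \<le> x $ i \<and> x $ i \<le> 1}"

text \<open>The network W^T sigma(W x + c) + b, where row j of W is W j (j < M)
  and sigma(z)_j = u_j * s(v_j z_j + beta_j).\<close>
definition grad_net ::
  "(real \<Rightarrow> real) \<Rightarrow> nat \<Rightarrow> (nat \<Rightarrow> real ^ 'n) \<Rightarrow> (nat \<Rightarrow> real) \<Rightarrow> real ^ 'n
   \<Rightarrow> (nat \<Rightarrow> real) \<Rightarrow> (nat \<Rightarrow> real) \<Rightarrow> (nat \<Rightarrow> real) \<Rightarrow> real ^ 'n \<Rightarrow> real ^ 'n" where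
  "grad_net s M W c b u v \<beta> x =
     (\<Sum>j<M. (u j * s (v j * (W j \<bullet> x + c j) + \<beta> j)) *\<^sub>R W j) + b"

definition ridge_sum ::
  "nat \<Rightarrow> (nat \<Rightarrow> real \<Rightarrow> real) \<Rightarrow> (nat \<Rightarrow> real ^ 'n) \<Rightarrow> (nat \<Rightarrow> real) \<Rightarrow> real ^ 'n \<Rightarrow> real" where
  "ridge_sum N \<psi> a bb x = (\<Sum>i<N. \<psi> i (a i \<bullet> x + bb i))"

end

theory Submission
  imports Defs
begin

lemma antideriv_exists:
  fixes f :: "real \<Rightarrow> real"
  assumes "continuous_on UNIV f"
  shows "\<exists>F. \<forall>x. (F has_real_derivative f x) (at x)"
proof (intro exI allI)
  fix x :: real
  have "((\<lambda>u. LBINT y=0..u. f y) has_vector_derivative (f x)) (at x within {-\<bar>x\<bar>-1..\<bar>x\<bar>+1})"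
    using interval_integral_FTC2[of "-\<bar>x\<bar>-1" 0 "\<bar>x\<bar>+1" f x] continuous_on_subset[OF assms]
    by (simp add: zero_ereal_def)
  moreover have "at x within {-\<bar>x\<bar>-1..\<bar>x\<bar>+1} = at x"
    by (rule at_within_Icc_at) auto
  ultimately show "((\<lambda>u. LBINT y=0..u. f y) has_real_derivative f x) (at x)"
    by (simp add: has_real_derivative_iff_has_vector_derivative)
qed

lemma div_swap: "((a::real) - b) / (c - d) = (b - a) / (d - c)"
  by (metis minus_diff_eq minus_divide_divide)

lemma convex_deriv_mono:
  fixes f :: "real \<Rightarrow> real"
  assumes cv: "convex_on UNIV f"
    and dx: "(f has_real_derivative Dx) (at x)" and dy: "(f has_real_derivative Dy) (at y)"
    and xy: "x < y"
  shows "Dx \<le> Dy"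
proof -
  have l1: "((\<lambda>z. (f z - f x) / (z - x)) \<longlongrightarrow> Dx) (at_right x)"
    using dx unfolding has_field_derivative_iff by (rule tendsto_within_subset) simp
  have e1: "eventually (\<lambda>z. (f z - f x) / (z - x) \<le> (f y - f x) / (y - x)) (at_right x)"
  proof -
    have "eventually (\<lambda>z. z < y) (at_right x)"
      unfolding eventually_at_right_field using xy by blast
    moreover have "eventually (\<lambda>z. x < z) (at_right x)"
      by (simp add: eventually_at_right_less)
    ultimately show ?thesis
    proof eventually_elim
      case (elim z)
      have "(f x - f z) / (x - z) \<le> (f x - f y) / (x - y)"
        using convex_on_slope_le(1)[OF cv, of x y z] elim by simp
      then show ?case by (simp add: div_swap)
    qed
  qed
  have A: "Dx \<le> (f y - f x) / (y - x)"
    using tendsto_upperbound[OF l1 e1] by simp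
  have l2: "((\<lambda>z. (f z - f y) / (z - y)) \<longlongrightarrow> Dy) (at_left y)"
    using dy unfolding has_field_derivative_iff by (rule tendsto_within_subset) simp
  have e2: "eventually (\<lambda>z. (f y - f x) / (y - x) \<le> (f z - f y) / (z - y)) (at_left y)"
  proof -
    have "eventually (\<lambda>z. x < z) (at_left y)"
      unfolding eventually_at_left_field using xy by blast
    moreover have "eventually (\<lambda>z. z < y) (at_left y)"
      unfolding eventually_at_left_field using xy by blast
    ultimately show ?thesis
    proof eventually_elim
      case (elim z)
      have "(f x - f y) / (x - y) \<le> (f z - f y) / (z - y)"
        using convex_on_slope_le(2)[OF cv, of x y z] elim by simp
      then show ?case by (simp add: div_swap)
    qed
  qed
  have B: "(f y - f x) / (y - x) \<le> Dy"
    using tendsto_lowerbound[OF l2 e2] by simp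
  show ?thesis using A B by simp
qed

lemma s_bounds:
  fixes s :: "real \<Rightarrow> real"
  assumes "mono s" "(s \<longlongrightarrow> 0) at_bot" "(s \<longlongrightarrow> 1) at_top"
  shows "0 \<le> s x" "s x \<le> 1"
proof -
  have "eventually (\<lambda>y. s y \<le> s x) at_bot"
    unfolding eventually_at_bot_linorder using assms(1) by (auto intro: monoD)
  then show "0 \<le> s x" using tendsto_upperbound[OF assms(2)] by simp
  have "eventually (\<lambda>y. s x \<le> s y) at_top"
    unfolding eventually_at_top_linorder using assms(1) by (auto intro: monoD)
  then show "s x \<le> 1" using tendsto_lowerbound[OF assms(3)] by simp
qed


lemma approx1d:
  fixes g s :: "real \<Rightarrow> real"
  assumes sm: "mono s" and sb: "(s \<longlongrightarrow> 0) at_bot" and st: "(s \<longlongrightarrow> 1) at_top"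
    and gc: "continuous_on {A..B} g" and gm: "mono g" and AB: "A < B" and dp: "\<delta> > 0"
  shows "\<exists>c0 (K::nat) d L \<beta>. L \<ge> 0 \<and> (\<forall>k<K. d k \<ge> 0) \<and>
           (\<forall>t\<in>{A..B}. \<bar>g t - (c0 + (\<Sum>k<K. d k * s (L*t + \<beta> k)))\<bar> \<le> \<delta>)"
proof -
  define \<omega> where "\<omega> = \<delta>/3"
  have \<omega>0: "\<omega> > 0" using dp by (simp add: \<omega>_def)
  have "uniformly_continuous_on {A..B} g" by (rule compact_uniformly_continuous[OF gc compact_Icc])
  then obtain h0 where h0: "h0 > 0" and h0g': "\<forall>t\<in>{A..B}. \<forall>t'\<in>{A..B}. dist t' t < h0 \<longrightarrow> dist (g t') (g t) < \<omega>"
    unfolding uniformly_continuous_on_def using \<omega>0 by blast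
  have h0g: "\<And>t t'. t\<in>{A..B} \<Longrightarrow> t'\<in>{A..B} \<Longrightarrow> dist t' t < h0 \<Longrightarrow> dist (g t') (g t) < \<omega>"
    using h0g' by blast
  define D where "D = g B - g A"
  have D0: "D \<ge> 0" using gm AB by (simp add: D_def monoD)
  define \<eta> where "\<eta> = \<delta> / (3*(D+1))"
  have \<eta>0: "\<eta> > 0" using dp D0 by (simp add: \<eta>_def)
  have \<eta>D: "\<eta> * D \<le> \<omega>"
  proof -
    have "\<eta> * D = \<omega> * (D / (D+1))" using D0 by (simp add: \<eta>_def \<omega>_def field_simps)
    also have "\<dots> \<le> \<omega> * 1" using D0 \<omega>0 by (intro mult_left_mono) auto
    finally show ?thesis by simp
  qed
  have "eventually (\<lambda>x. 1 - \<eta> < s x) at_top" using order_tendstoD(1)[OF st] \<eta>0 by simp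
  then obtain X1 where X1: "\<And>x. x \<ge> X1 \<Longrightarrow> 1 - \<eta> < s x" unfolding eventually_at_top_linorder by blast
  have "eventually (\<lambda>x. s x < \<eta>) at_bot" using order_tendstoD(2)[OF sb] \<eta>0 by simp
  then obtain X0 where X0: "\<And>x. x \<le> X0 \<Longrightarrow> s x < \<eta>" unfolding eventually_at_bot_linorder by blast
  obtain K :: nat where K: "(B-A)/h0 < real K" using reals_Archimedean2 by blast
  have "(B-A)/h0 > 0" using AB h0 by simp
  then have Kp: "K > 0" using K by (cases K) auto
  define h where "h = (B-A)/real K"
  have hp: "h > 0" using AB Kp by (simp add: h_def)
  have hh0: "h < h0" using K h0 Kp by (simp add: h_def divide_less_eq pos_divide_less_eq mult.commute)
  define \<tau> where "\<tau> n = A + real n * h" for n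
  have \<tau>K: "\<tau> K = B" using Kp by (simp add: \<tau>_def h_def)
  have \<tau>diff: "\<tau> i - \<tau> j = (real i - real j) * h" for i j by (simp add: \<tau>_def algebra_simps)
  have \<tau>mono: "i \<le> j \<Longrightarrow> \<tau> i \<le> \<tau> j" for i j using hp by (simp add: \<tau>_def mult_right_mono)
  have \<tau>in: "i \<le> K \<Longrightarrow> \<tau> i \<in> {A..B}" for i using \<tau>mono[of 0 i] \<tau>mono[of i K] \<tau>K by (simp add: \<tau>_def)
  define L where "L = 2*(\<bar>X1\<bar> + \<bar>X0\<bar>)/h"
  have L0: "L \<ge> 0" using hp by (simp add: L_def)
  have Lh: "L*h/2 = \<bar>X1\<bar>+\<bar>X0\<bar>" using hp by (simp add: L_def)
  define d where "d k = g (\<tau> (Suc k)) - g (\<tau> k)" for k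
  define \<beta> where "\<beta> k = - L * (\<tau> (Suc k) - h/2)" for k
  have d0: "d k \<ge> 0" for k using \<tau>mono[of k "Suc k"] gm by (simp add: d_def monoD)
  have tele: "(\<Sum>k<n. d k) = g (\<tau> n) - g A" for n
    unfolding d_def by (subst sum_lessThan_telescope) (simp add: \<tau>_def)
  have arg: "L*t + \<beta> k = L*(t - \<tau> (Suc k)) + L*h/2" for t k by (simp add: \<beta>_def algebra_simps)
  have sb01: "0 \<le> s x" "s x \<le> 1" for x using s_bounds[OF sm sb st] by auto
  have main: "\<forall>t\<in>{A..B}. \<bar>g t - (g A + (\<Sum>k<K. d k * s (L*t + \<beta> k)))\<bar> \<le> \<delta>"
  proof
    fix t assume t: "t \<in> {A..B}"
    obtain m where m: "m < K" "\<tau> m \<le> t" "t \<le> \<tau> (Suc m)"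
    proof -
      define q where "q = (t - A)/h"
      have tq: "t = A + q*h" using hp by (simp add: q_def)
      have q0: "q \<ge> 0" using t hp by (simp add: q_def)
      have qK: "q \<le> real K" using t hp Kp by (simp add: q_def h_def field_simps)
      define fl where "fl = nat \<lfloor>q\<rfloor>"
      have fl1: "real fl \<le> q" using q0 by (simp add: fl_def)
      have fl2: "q < real fl + 1" using q0 by (simp add: fl_def)
      define m where "m = min fl (K - 1)"
      have "m < K" using Kp by (simp add: m_def)
      moreover have "\<tau> m \<le> t"
      proof -
        have "real m \<le> q" using fl1 by (simp add: m_def)
        then show ?thesis using tq hp by (simp add: \<tau>_def mult_right_mono)
      qed
      moreover have "t \<le> \<tau> (Suc m)"
      proof (cases "fl \<le> K - 1")
        case True
        then have "q \<le> real (Suc m)" using fl2 by (simp add: m_def)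
        then show ?thesis using tq hp by (simp add: \<tau>_def mult_right_mono)
      next
        case False
        then have "Suc m = K" using Kp by (simp add: m_def)
        then show ?thesis using \<tau>K t by simp
      qed
      ultimately show ?thesis using that by blast
    qed
    define \<sigma> where "\<sigma> k = s (L*t + \<beta> k)" for k
    have hi: "1 - \<eta> < \<sigma> k" if "k < m" for k
    proof -
      have "\<tau> (Suc k) \<le> \<tau> m" using that by (intro \<tau>mono) simp
      then have "L*(t - \<tau> (Suc k)) \<ge> 0" using m L0 by simp
      then have "L*t + \<beta> k \<ge> X1" using arg[of t k] Lh by linarith
      then show ?thesis unfolding \<sigma>_def by (rule X1)
    qed
    have lo: "\<sigma> k < \<eta>" if "m < k" for k
    proof -
      have "\<tau> (Suc k) - \<tau> (Suc m) = (real k - real m) * h" using \<tau>diff by simp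
      also have "\<dots> \<ge> 1 * h" using that hp by (intro mult_right_mono) auto
      finally have "t - \<tau> (Suc k) \<le> - h" using m by simp
      then have "L*(t - \<tau> (Suc k)) \<le> L * (-h)" using L0 by (rule mult_left_mono)
      then have "L*t + \<beta> k \<le> X0" using arg[of t k] Lh by linarith
      then show ?thesis unfolding \<sigma>_def by (rule X0)
    qed
    define S where "S = (\<Sum>k<K. d k * \<sigma> k)"
    have lower: "(1 - \<eta>) * (g (\<tau> m) - g A) \<le> S"
    proof -
      have "(\<Sum>k<K. if k \<in> {..<m} then d k * (1 - \<eta>) else 0) \<le> S"
        unfolding S_def
      proof (rule sum_mono)
        fix k assume "k \<in> {..<K}"
        show "(if k \<in> {..<m} then d k * (1 - \<eta>) else 0) \<le> d k * \<sigma> k"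
          using hi[of k] d0[of k] sb01[of "L*t + \<beta> k"] by (auto simp: \<sigma>_def intro: mult_left_mono)
      qed
      moreover have "(\<Sum>k<K. if k \<in> {..<m} then d k * (1 - \<eta>) else 0) = (\<Sum>k\<in>{..<K} \<inter> {..<m}. d k * (1 - \<eta>))"
        by (rule sum.inter_restrict[symmetric]) simp
      moreover have "{..<K} \<inter> {..<m} = {..<m}" using m by auto
      ultimately show ?thesis using tele[of m] by (simp add: sum_distrib_right[symmetric] mult.commute)
    qed
    have upper: "S \<le> (g (\<tau> (Suc m)) - g A) + \<eta> * D"
    proof -
      have "S \<le> (\<Sum>k<K. (if k \<in> {..<Suc m} then d k else 0) + \<eta> * d k)"
        unfolding S_def
      proof (rule sum_mono)
        fix k assume "k \<in> {..<K}"
        show "d k * \<sigma> k \<le> (if k \<in> {..<Suc m} then d k else 0) + \<eta> * d k"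
        proof (cases "k \<le> m")
          case True
          have "d k * \<sigma> k \<le> d k * 1" using d0[of k] sb01[of "L*t + \<beta> k"]
            by (intro mult_left_mono) (auto simp: \<sigma>_def)
          then show ?thesis using True d0[of k] \<eta>0 by (simp add: add_increasing2)
        next
          case False
          have "d k * \<sigma> k \<le> d k * \<eta>" using d0[of k] lo[of k] False
            by (intro mult_left_mono) auto
          then show ?thesis using False by (simp add: mult.commute)
        qed
      qed
      also have "\<dots> = (\<Sum>k\<in>{..<K} \<inter> {..<Suc m}. d k) + \<eta> * (\<Sum>k<K. d k)"
        by (simp add: sum.distrib sum_distrib_left sum.inter_restrict)
      also have "{..<K} \<inter> {..<Suc m} = {..<Suc m}" using m by auto
      finally show ?thesis using tele[of "Suc m"] tele[of K] \<tau>K by (simp add: D_def)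
    qed
    have gm1: "g (\<tau> m) \<le> g t" "g t \<le> g (\<tau> (Suc m))" using m gm by (auto intro: monoD)
    have gmB: "g (\<tau> m) \<le> g B" using \<tau>in[of m] m gm by (auto intro: monoD)
    have c1: "g t - g (\<tau> m) < \<omega>"
    proof -
      have "dist t (\<tau> m) < h0" using m \<tau>diff[of "Suc m" m] hh0 by (simp add: dist_real_def)
      then show ?thesis using h0g[OF \<tau>in[of m] t] m gm1 by (simp add: dist_real_def)
    qed
    have c2: "g (\<tau> (Suc m)) - g t < \<omega>"
    proof -
      have "dist (\<tau> (Suc m)) t < h0" using m \<tau>diff[of "Suc m" m] hh0 by (simp add: dist_real_def)
      then show ?thesis using h0g[OF t \<tau>in[of "Suc m"]] m gm1 by (simp add: dist_real_def)
    qed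
    have e1: "\<eta> * (g (\<tau> m) - g A) \<le> \<eta> * D" using gmB \<eta>0 by (intro mult_left_mono) (auto simp: D_def)
    have ex: "(1 - \<eta>) * (g (\<tau> m) - g A) = (g (\<tau> m) - g A) - \<eta> * (g (\<tau> m) - g A)"
      by (simp add: algebra_simps)
    have "\<bar>g t - (g A + S)\<bar> \<le> 2*\<omega>"
      using lower upper c1 c2 e1 \<eta>D ex by linarith
    then show "\<bar>g t - (g A + (\<Sum>k<K. d k * s (L*t + \<beta> k)))\<bar> \<le> \<delta>"
      using dp by (simp add: S_def \<sigma>_def \<omega>_def)
  qed
  show ?thesis
    apply (rule_tac x="g A" in exI, rule_tac x=K in exI, rule_tac x=d in exI, rule_tac x=L in exI, rule_tac x=\<beta> in exI)
    using L0 d0 main by blast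
qed


definition netrep :: "(real \<Rightarrow> real) \<Rightarrow> (real ^ 'n \<Rightarrow> real ^ 'n) \<Rightarrow> bool" where
  "netrep s f \<longleftrightarrow> (\<exists>M W c b u v \<beta>. (\<forall>j<M. u j \<ge> 0 \<and> v j \<ge> 0) \<and>
      (\<forall>x. grad_net s M W c b u v \<beta> x = f x))"

lemma grad_net_Suc:
  "grad_net s (Suc M) (W(M:=w)) (c(M:=c')) b (u(M:=d)) (v(M:=L)) (\<beta>(M:=\<beta>')) x
   = grad_net s M W c b u v \<beta> x + (d * s (L * (w \<bullet> x + c') + \<beta>')) *\<^sub>R w"
proof -
  have "(\<Sum>j<M. ((u(M:=d)) j * s ((v(M:=L)) j * ((W(M:=w)) j \<bullet> x + (c(M:=c')) j) + (\<beta>(M:=\<beta>')) j)) *\<^sub>R (W(M:=w)) j)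
      = (\<Sum>j<M. (u j * s (v j * (W j \<bullet> x + c j) + \<beta> j)) *\<^sub>R W j)"
    by (rule sum.cong) auto
  then show ?thesis unfolding grad_net_def by (simp add: algebra_simps)
qed

lemma netrep_const: "netrep s (\<lambda>x. b)"
  unfolding netrep_def by (rule exI[of _ 0]) (simp add: grad_net_def)

lemma netrep_neuron:
  assumes "netrep s f" "d \<ge> 0" "L \<ge> 0"
  shows "netrep s (\<lambda>x. f x + (d * s (L * (w \<bullet> x + c') + \<beta>')) *\<^sub>R w)"
proof -
  obtain M W c b u v \<beta> where h: "\<forall>j<M. u j \<ge> 0 \<and> v j \<ge> 0" "\<forall>x. grad_net s M W c b u v \<beta> x = f x"
    using assms(1) unfolding netrep_def by blast
  have "\<forall>j<Suc M. (u(M:=d)) j \<ge> 0 \<and> (v(M:=L)) j \<ge> 0" using h(1) assms by auto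
  moreover have "\<forall>x. grad_net s (Suc M) (W(M:=w)) (c(M:=c')) b (u(M:=d)) (v(M:=L)) (\<beta>(M:=\<beta>')) x
     = f x + (d * s (L * (w \<bullet> x + c') + \<beta>')) *\<^sub>R w"
    using h(2) by (simp add: grad_net_Suc)
  ultimately show ?thesis unfolding netrep_def by blast
qed

lemma netrep_M1:
  assumes "netrep s f"
  shows "\<exists>M W c b u v \<beta>. M \<ge> 1 \<and> (\<forall>j<M. u j \<ge> 0 \<and> v j \<ge> 0) \<and> (\<forall>x. grad_net s M W c b u v \<beta> x = f x)"
proof -
  obtain M W c b u v \<beta> where h: "\<forall>j<M. u j \<ge> 0 \<and> v j \<ge> 0" "\<forall>x. grad_net s M W c b u v \<beta> x = f x"
    using assms(1) unfolding netrep_def by blast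
  have "\<forall>j<Suc M. (u(M:=0)) j \<ge> 0 \<and> (v(M:=0)) j \<ge> 0" using h(1) by auto
  moreover have "\<forall>x. grad_net s (Suc M) (W(M:=0)) (c(M:=0)) b (u(M:=0)) (v(M:=0)) (\<beta>(M:=0)) x = f x"
    using h(2) by (simp add: grad_net_Suc)
  ultimately show ?thesis
    apply (rule_tac x="Suc M" in exI, rule_tac x="W(M:=0)" in exI, rule_tac x="c(M:=0)" in exI, rule_tac x="b" in exI)
    apply (rule_tac x="u(M:=0)" in exI, rule_tac x="v(M:=0)" in exI, rule_tac x="\<beta>(M:=0)" in exI)
    by simp
qed

lemma netrep_addc:
  assumes "netrep s f"
  shows "netrep s (\<lambda>x. f x + b')"
proof -
  obtain M W c b u v \<beta> where h: "\<forall>j<M. u j \<ge> 0 \<and> v j \<ge> 0" "\<forall>x. grad_net s M W c b u v \<beta> x = f x"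
    using assms(1) unfolding netrep_def by blast
  have "\<forall>x. grad_net s M W c (b + b') u v \<beta> x = f x + b'"
    using h(2) by (simp add: grad_net_def algebra_simps)
  then show ?thesis using h(1) unfolding netrep_def by blast
qed

lemma netrep_sum:
  fixes K :: nat
  assumes "netrep s f" "\<forall>k<K. d k \<ge> 0" "L \<ge> 0"
  shows "netrep s (\<lambda>x. f x + (\<Sum>k<K. d k * s (L * (w \<bullet> x + c') + \<beta> k)) *\<^sub>R w)"
  using assms(2)
proof (induction K)
  case 0
  then show ?case using assms(1) by simp
next
  case (Suc K)
  then have "netrep s (\<lambda>x. f x + (\<Sum>k<K. d k * s (L * (w \<bullet> x + c') + \<beta> k)) *\<^sub>R w)" by simp
  then have "netrep s (\<lambda>x. (f x + (\<Sum>k<K. d k * s (L * (w \<bullet> x + c') + \<beta> k)) *\<^sub>R w)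
        + (d K * s (L * (w \<bullet> x + c') + \<beta> K)) *\<^sub>R w)"
    using Suc.prems assms(3) by (intro netrep_neuron) auto
  then show ?case by (simp add: scaleR_add_left add.assoc)
qed

lemma convex_on_sum_fun:
  assumes "finite I" "\<And>i. i \<in> I \<Longrightarrow> convex_on S (f i)" "convex S"
  shows "convex_on S (\<lambda>x. \<Sum>i\<in>I. f i x)"
  using assms
proof (induction I rule: finite_induct)
  case empty
  then show ?case by (simp add: convex_on_const)
next
  case (insert i I)
  then show ?case by (simp add: convex_on_add)
qed

lemma convex_on_affine_comp:
  fixes g :: "real \<Rightarrow> real" and w :: "'a::real_inner"
  assumes "convex_on UNIV g"
  shows "convex_on UNIV (\<lambda>x. g (w \<bullet> x + c))"
  unfolding convex_on_def
proof (intro conjI ballI allI impI)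
  fix x y :: 'a and p q :: real
  assume pq: "0 \<le> p" "0 \<le> q" "p + q = 1"
  have "w \<bullet> (p *\<^sub>R x + q *\<^sub>R y) + c = p *\<^sub>R (w \<bullet> x + c) + q *\<^sub>R (w \<bullet> y + c)"
    using pq by (simp add: inner_add_right algebra_simps) (metis mult.right_neutral distrib_left)
  then show "g (w \<bullet> (p *\<^sub>R x + q *\<^sub>R y) + c) \<le> p * g (w \<bullet> x + c) + q * g (w \<bullet> y + c)"
    using assms pq unfolding convex_on_def by simp
qed simp

lemma convex_on_inner: "convex_on UNIV (\<lambda>x::'a::real_inner. b \<bullet> x)"
  unfolding convex_on_def by (simp add: inner_add_right)

lemma potential:
  fixes s :: "real \<Rightarrow> real" and W :: "nat \<Rightarrow> real ^ 'n"
  assumes sc: "continuous_on UNIV s" and sm: "mono s" and uv: "\<forall>j<M. u j \<ge> 0 \<and> v j \<ge> 0"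
  shows "\<exists>\<Phi> :: real ^ 'n \<Rightarrow> real. convex_on UNIV \<Phi> \<and>
               (\<forall>x. (\<Phi> has_derivative (\<lambda>h. grad_net s M W c b u v \<beta> x \<bullet> h)) (at x)) \<and>
               continuous_on UNIV (grad_net s M W c b u v \<beta>)"
proof -
  have "\<forall>j. \<exists>F. \<forall>t. (F has_real_derivative s (v j * t + \<beta> j)) (at t)"
  proof
    fix j
    have "continuous_on UNIV (\<lambda>t. s (v j * t + \<beta> j))"
      by (intro continuous_on_compose2[OF sc] continuous_intros) auto
    then show "\<exists>F. \<forall>t. (F has_real_derivative s (v j * t + \<beta> j)) (at t)"
      by (rule antideriv_exists)
  qed
  then obtain S where S: "\<And>j t. (S j has_real_derivative s (v j * t + \<beta> j)) (at t)"
    by metis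
  have Sc: "convex_on UNIV (S j)" if "j < M" for j
  proof (rule convex_on_realI)
    show "(S j has_real_derivative s (v j * t + \<beta> j)) (at t)" for t by (rule S)
    show "s (v j * x + \<beta> j) \<le> s (v j * y + \<beta> j)" if "x \<le> y" for x y
      using uv \<open>j < M\<close> that by (intro monoD[OF sm]) (simp add: mult_left_mono)
  qed simp
  define \<Phi> where "\<Phi> x = (\<Sum>j<M. u j * S j (W j \<bullet> x + c j)) + b \<bullet> x" for x
  have "convex_on UNIV \<Phi>"
    unfolding \<Phi>_def
    by (intro convex_on_add convex_on_sum_fun convex_on_cmul convex_on_affine_comp Sc convex_on_inner)
       (use uv in auto)
  moreover have "(\<Phi> has_derivative (\<lambda>h. grad_net s M W c b u v \<beta> x \<bullet> h)) (at x)" for x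
  proof -
    have d1: "((\<lambda>x. S j (W j \<bullet> x + c j)) has_derivative
               (\<lambda>h. s (v j * (W j \<bullet> x + c j) + \<beta> j) * (W j \<bullet> h))) (at x)" for j
    proof -
      have "((\<lambda>x. W j \<bullet> x + c j) has_derivative (\<lambda>h. W j \<bullet> h)) (at x)"
        by (auto intro!: derivative_eq_intros)
      moreover have "(S j has_derivative (*) (s (v j * (W j \<bullet> x + c j) + \<beta> j))) (at (W j \<bullet> x + c j))"
        using S unfolding has_field_derivative_def by blast
      ultimately show ?thesis by (rule has_derivative_compose)
    qed
    have "(\<Phi> has_derivative (\<lambda>h. (\<Sum>j<M. u j * (s (v j * (W j \<bullet> x + c j) + \<beta> j) * (W j \<bullet> h))) + b \<bullet> h)) (at x)"
      unfolding \<Phi>_def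
      by (intro has_derivative_add has_derivative_sum has_derivative_mult_right d1)
         (auto intro!: derivative_eq_intros)
    moreover have "(\<lambda>h. (\<Sum>j<M. u j * (s (v j * (W j \<bullet> x + c j) + \<beta> j) * (W j \<bullet> h))) + b \<bullet> h)
        = (\<lambda>h. grad_net s M W c b u v \<beta> x \<bullet> h)"
      by (simp add: grad_net_def inner_add_left inner_sum_left mult.assoc)
    ultimately show ?thesis by simp
  qed
  moreover have "continuous_on UNIV (grad_net s M W c b u v \<beta>)"
    unfolding grad_net_def[abs_def]
    by (intro continuous_intros continuous_on_compose2[OF sc]) auto
  ultimately show ?thesis by blast
qed


lemma cube_bound:
  fixes x :: "real ^ 'n"
  assumes "x \<in> unit_cube"
  shows "\<bar>w \<bullet> x\<bar> \<le> norm w * real CARD('n)"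
proof -
  have "norm x \<le> (\<Sum>i\<in>UNIV. \<bar>x $ i\<bar>)" by (rule norm_le_l1_cart)
  also have "\<dots> \<le> (\<Sum>i\<in>(UNIV::'n set). 1)"
    using assms by (intro sum_mono) (auto simp: unit_cube_def)
  finally have "norm x \<le> real CARD('n)" by simp
  then have "norm w * norm x \<le> norm w * real CARD('n)" by (simp add: mult_left_mono)
  then show ?thesis using Cauchy_Schwarz_ineq2[of w x] by linarith
qed

theorem theorem4:
  fixes s :: "real \<Rightarrow> real"
    and N :: nat
    and \<psi> :: "nat \<Rightarrow> real \<Rightarrow> real"
    and a :: "nat \<Rightarrow> real ^ 'n"
    and bb :: "nat \<Rightarrow> real"
    and gradF :: "real ^ 'n \<Rightarrow> real ^ 'n"
  assumes s_cont: "continuous_on UNIV s"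
    and s_mono: "mono s"
    and s_bot: "(s \<longlongrightarrow> 0) at_bot"
    and s_top: "(s \<longlongrightarrow> 1) at_top"
    and psi_diff: "\<And>i t. i < N \<Longrightarrow> \<psi> i differentiable at t"
    and psi_C1: "\<And>i. i < N \<Longrightarrow> continuous_on UNIV (deriv (\<psi> i))"
    and psi_convex: "\<And>i. i < N \<Longrightarrow> convex_on UNIV (\<psi> i)"
    and gradF: "\<And>x. (ridge_sum N \<psi> a bb has_derivative (\<lambda>h. gradF x \<bullet> h)) (at x)"
  shows "(\<forall>\<epsilon>>0. \<exists>M W c b u v \<beta>. M \<ge> 1 \<and> (\<forall>j<M. u j \<ge> 0 \<and> v j \<ge> 0) \<and>
            (SUP x\<in>unit_cube. norm (gradF x - grad_net s M W c b u v \<beta> x)) < \<epsilon>)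
       \<and> (\<forall>M W c b u v \<beta>. (\<forall>j<M. u j \<ge> 0 \<and> v j \<ge> 0) \<longrightarrow>
            (\<exists>\<Phi> :: real ^ 'n \<Rightarrow> real. convex_on UNIV \<Phi> \<and>
               (\<forall>x. (\<Phi> has_derivative (\<lambda>h. grad_net s M W c b u v \<beta> x \<bullet> h)) (at x)) \<and>
               continuous_on UNIV (grad_net s M W c b u v \<beta>)))"
proof (intro conjI allI impI)
  fix M :: nat and W :: "nat \<Rightarrow> real ^ 'n" and c :: "nat \<Rightarrow> real" and b :: "real ^ 'n"
    and u v \<beta> :: "nat \<Rightarrow> real"
  assume "\<forall>j<M. u j \<ge> 0 \<and> v j \<ge> 0"
  then show "\<exists>\<Phi> :: real ^ 'n \<Rightarrow> real. convex_on UNIV \<Phi> \<and>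
               (\<forall>x. (\<Phi> has_derivative (\<lambda>h. grad_net s M W c b u v \<beta> x \<bullet> h)) (at x)) \<and>
               continuous_on UNIV (grad_net s M W c b u v \<beta>)"
    by (rule potential[OF s_cont s_mono])
next
  fix \<epsilon> :: real assume ep: "\<epsilon> > 0"
  define G where "G i = deriv (\<psi> i)" for i
  have dpsi: "(\<psi> i has_real_derivative G i t) (at t)" if "i < N" for i t
    using psi_diff[OF that] by (simp add: G_def DERIV_deriv_iff_real_differentiable)
  have Gmono: "mono (G i)" if "i < N" for i
  proof (rule monoI)
    fix x y :: real assume "x \<le> y"
    then show "G i x \<le> G i y"
      using convex_deriv_mono[OF psi_convex[OF that] dpsi[OF that] dpsi[OF that], of x y]
      by (cases "x = y") auto
  qed
  have gF: "gradF x = (\<Sum>i<N. G i (a i \<bullet> x + bb i) *\<^sub>R a i)" for x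
  proof -
    define V where "V = (\<Sum>i<N. G i (a i \<bullet> x + bb i) *\<^sub>R a i)"
    have d1: "((\<lambda>x. \<psi> i (a i \<bullet> x + bb i)) has_derivative
               (\<lambda>h. G i (a i \<bullet> x + bb i) * (a i \<bullet> h))) (at x)" if "i < N" for i
    proof -
      have "((\<lambda>x. a i \<bullet> x + bb i) has_derivative (\<lambda>h. a i \<bullet> h)) (at x)"
        by (auto intro!: derivative_eq_intros)
      moreover have "(\<psi> i has_derivative (*) (G i (a i \<bullet> x + bb i))) (at (a i \<bullet> x + bb i))"
        using dpsi[OF that] unfolding has_field_derivative_def by blast
      ultimately show ?thesis by (rule has_derivative_compose)
    qed
    have "(ridge_sum N \<psi> a bb has_derivative (\<lambda>h. \<Sum>i<N. G i (a i \<bullet> x + bb i) * (a i \<bullet> h))) (at x)"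
      unfolding ridge_sum_def[abs_def] by (intro has_derivative_sum d1) auto
    then have eq: "(\<lambda>h. gradF x \<bullet> h) = (\<lambda>h. \<Sum>i<N. G i (a i \<bullet> x + bb i) * (a i \<bullet> h))"
      by (rule has_derivative_unique[OF gradF])
    have "\<And>h. gradF x \<bullet> h = V \<bullet> h"
      using eq unfolding V_def by (simp add: inner_sum_left fun_eq_iff)
    then have "(gradF x - V) \<bullet> (gradF x - V) = 0" by (simp add: inner_diff_left)
    then show ?thesis unfolding V_def[symmetric] by simp
  qed
  define \<delta> where "\<delta> = \<epsilon> / (2 * (real N + 1))"
  have \<delta>0: "\<delta> > 0" using ep by (simp add: \<delta>_def)
  have ind: "n \<le> N \<Longrightarrow> \<exists>f. netrep s f \<and>
      (\<forall>x\<in>unit_cube. norm ((\<Sum>i<n. G i (a i \<bullet> x + bb i) *\<^sub>R a i) - f x) \<le> real n * \<delta>)" for n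
  proof (induction n)
    case 0
    show ?case by (rule exI[of _ "\<lambda>x. 0"]) (simp add: netrep_const)
  next
    case (Suc n)
    then have nN: "n < N" by simp
    obtain f where f: "netrep s f"
      "\<forall>x\<in>unit_cube. norm ((\<Sum>i<n. G i (a i \<bullet> x + bb i) *\<^sub>R a i) - f x) \<le> real n * \<delta>"
      using Suc by auto
    define R where "R = norm (a n) * real CARD('n) + 1"
    define \<delta>' where "\<delta>' = \<delta> / (norm (a n) + 1)"
    have \<delta>'0: "\<delta>' > 0" unfolding \<delta>'_def
      by (intro divide_pos_pos \<delta>0) (simp add: add_nonneg_pos)
    have Rp: "bb n - R < bb n + R" by (simp add: R_def add_pos_nonneg)
    have Gc: "continuous_on {bb n - R..bb n + R} (G n)"
      using psi_C1[OF nN] unfolding G_def by (rule continuous_on_subset) simp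
    obtain c0 K d L \<beta> where ap: "L \<ge> 0" "\<forall>k<(K::nat). d k \<ge> 0"
      "\<forall>t\<in>{bb n - R..bb n + R}. \<bar>G n t - (c0 + (\<Sum>k<K. d k * s (L*t + \<beta> k)))\<bar> \<le> \<delta>'"
      using approx1d[OF s_mono s_bot s_top Gc Gmono[OF nN] Rp \<delta>'0] by blast
    define f' where "f' x = (f x + (\<Sum>k<K. d k * s (L * (a n \<bullet> x + bb n) + \<beta> k)) *\<^sub>R a n) + c0 *\<^sub>R a n" for x
    have "netrep s f'"
      unfolding f'_def[abs_def] by (intro netrep_addc netrep_sum f(1) ap(1,2))
    moreover have "\<forall>x\<in>unit_cube. norm ((\<Sum>i<Suc n. G i (a i \<bullet> x + bb i) *\<^sub>R a i) - f' x) \<le> real (Suc n) * \<delta>"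
    proof
      fix x :: "real ^ 'n" assume x: "x \<in> unit_cube"
      define t where "t = a n \<bullet> x + bb n"
      have "t \<in> {bb n - R..bb n + R}"
        using cube_bound[OF x, of "a n"] by (auto simp: t_def R_def abs_le_iff)
      then have et: "\<bar>G n t - (c0 + (\<Sum>k<K. d k * s (L*t + \<beta> k)))\<bar> \<le> \<delta>'" using ap(3) by blast
      have "(\<Sum>i<Suc n. G i (a i \<bullet> x + bb i) *\<^sub>R a i) - f' x
          = ((\<Sum>i<n. G i (a i \<bullet> x + bb i) *\<^sub>R a i) - f x)
            + (G n t - (c0 + (\<Sum>k<K. d k * s (L*t + \<beta> k)))) *\<^sub>R a n"
        by (simp add: f'_def t_def algebra_simps)
      also have "norm \<dots> \<le> norm ((\<Sum>i<n. G i (a i \<bullet> x + bb i) *\<^sub>R a i) - f x)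
            + \<bar>G n t - (c0 + (\<Sum>k<K. d k * s (L*t + \<beta> k)))\<bar> * norm (a n)"
        by (rule order_trans[OF norm_triangle_ineq]) simp
      also have "\<dots> \<le> real n * \<delta> + \<delta>' * norm (a n)"
        using f(2) x et by (intro add_mono mult_right_mono) auto
      also have "\<delta>' * norm (a n) \<le> \<delta>"
      proof -
        have "\<delta>' * norm (a n) = \<delta> * (norm (a n) / (norm (a n) + 1))"
          by (simp add: \<delta>'_def)
        also have "\<dots> \<le> \<delta> * 1"
          using \<delta>0 by (intro mult_left_mono) (auto simp: divide_le_eq_1 add_nonneg_pos)
        finally show ?thesis by simp
      qed
      finally show "norm ((\<Sum>i<Suc n. G i (a i \<bullet> x + bb i) *\<^sub>R a i) - f' x) \<le> real (Suc n) * \<delta>"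
        by (simp add: algebra_simps)
    qed
    ultimately show ?case by blast
  qed
  obtain f where f: "netrep s f"
    "\<forall>x\<in>unit_cube. norm ((\<Sum>i<N. G i (a i \<bullet> x + bb i) *\<^sub>R a i) - f x) \<le> real N * \<delta>"
    using ind[of N] by auto
  obtain M W c b u v \<beta> where net: "M \<ge> 1" "\<forall>j<M. u j \<ge> 0 \<and> v j \<ge> 0"
    "\<forall>x. grad_net s M W c b u v \<beta> x = f x"
    using netrep_M1[OF f(1)] by blast
  have ne: "unit_cube \<noteq> ({} :: (real ^ 'n) set)"
  proof -
    have "(0 :: real ^ 'n) \<in> unit_cube" by (simp add: unit_cube_def)
    then show ?thesis by blast
  qed
  have "(SUP x\<in>unit_cube. norm (gradF x - grad_net s M W c b u v \<beta> x)) \<le> real N * \<delta>"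
    using ne by (rule cSUP_least) (use f(2) net(3) gF in auto)
  also have "real N * \<delta> < \<epsilon>"
  proof -
    have "real N * \<delta> = \<epsilon> * (real N / (2 * (real N + 1)))" by (simp add: \<delta>_def)
    also have "\<dots> < \<epsilon> * 1" using ep by (intro mult_strict_left_mono) auto
    finally show ?thesis by simp
  qed
  finally show "\<exists>M W c b u v \<beta>. M \<ge> 1 \<and> (\<forall>j<M. u j \<ge> 0 \<and> v j \<ge> 0) \<and>
            (SUP x\<in>unit_cube. norm (gradF x - grad_net s M W c b u v \<beta> x)) < \<epsilon>"
    using net(1,2) by blast
qed

end
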